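(* Let $A \in \mathbb{R}^{m \times r}$, $B=(b_{ji}) \in \mathbb{R}^{r \times n}$ with rows $b_1,\dots,b_r$, $S\subseteq\mathbb{R}^n$, and for $\kappa\in\mathbb{R}^r_+$ let $f_\kappa(x) = A_\kappa x^B$ on $\mathbb{R}^n_+$. Assume $f_\kappa$ is injective with respect to $S$ for all $\kappa \in \mathbb{R}^r_+$. Let $\Omega_B = \{ x \in \overline{\mathbb{R}}^n_+ \mid x_i \neq 0 \text{ whenever } b_{ji} < 0 \text{ for some } j \in [r] \}$ and let $\bar f_\kappa\colon\Omega_B\to\mathbb{R}^m$, $\bar f_\kappa(x)=A_\kappa x^B$, be the extension of $f_\kappa$. Let $x,y \in \Omega_B$ with $x \neq y$ and $x-y\in S$, such that for every $j \in [r]$, $x^{b_j}=y^{b_j}=0$ implies $x_i = y_i = 0$ for all $i \in [n]$ with $b_{ji} \neq 0$. Then $\bar f_\kappa(x) \neq \bar f_\kappa(y)$ for all $\kappa \in \mathbb{R}^r_+$.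
   Context: $\mathbb{R}_+$ denotes the strictly positive reals and $\overline{\mathbb{R}}_+$ the nonnegative reals. $x^{b_j}=\prod_i x_i^{b_{ji}}$ with the convention $0^0=1$ (well defined on $\Omega_B$), $x^B=(x^{b_1},\dots,x^{b_r})$, $A_\kappa=A\,\mathrm{diag}(\kappa)$, $[r]=\{1,\dots,r\}$. A function $g$ on $\mathbb{R}^n_+$ is injective with respect to $S$ if $x,y\in\mathbb{R}^n_+$, $x\ne y$, $x-y\in S$ imply $g(x)\neq g(y)$. *)

theory Defs
  imports "HOL-Analysis.Analysis"
begin

text \<open>Real power with the convention 0^0 = 1 (for nonnegative base).\<close>
definition rpow :: "real \<Rightarrow> real \<Rightarrow> real" where
  "rpow x a = (if a = 0 then 1 else x powr a)"

definition monom_pow :: "real ^ 'n \<Rightarrow> real ^ 'n \<Rightarrow> real" where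
  "monom_pow x b = (\<Prod>i\<in>UNIV. rpow (x $ i) (b $ i))"

definition vec_pow :: "real ^ 'n \<Rightarrow> real ^ 'n ^ 'r \<Rightarrow> real ^ 'r" where
  "vec_pow x B = (\<chi> j. monom_pow x (B $ j))"

text \<open>A_kappa x^B = A diag(kappa) x^B.\<close>
definition gmak :: "real ^ 'r ^ 'm \<Rightarrow> real ^ 'n ^ 'r \<Rightarrow> real ^ 'r \<Rightarrow> real ^ 'n \<Rightarrow> real ^ 'm" where
  "gmak A B \<kappa> x = A *v (\<chi> j. \<kappa> $ j * vec_pow x B $ j)"

definition pos_vec :: "real ^ 'k \<Rightarrow> bool" where
  "pos_vec x \<longleftrightarrow> (\<forall>i. x $ i > 0)"

definition nonneg_vec :: "real ^ 'k \<Rightarrow> bool" where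
  "nonneg_vec x \<longleftrightarrow> (\<forall>i. x $ i \<ge> 0)"

definition injective_wrt :: "(real ^ 'n \<Rightarrow> 'b) \<Rightarrow> (real ^ 'n) set \<Rightarrow> bool" where
  "injective_wrt g S \<longleftrightarrow>
     (\<forall>x y. pos_vec x \<longrightarrow> pos_vec y \<longrightarrow> x \<noteq> y \<longrightarrow> x - y \<in> S \<longrightarrow> g x \<noteq> g y)"

definition Omega :: "real ^ 'n ^ 'r \<Rightarrow> (real ^ 'n) set" where
  "Omega B = {x. nonneg_vec x \<and> (\<forall>i. (\<exists>j. B $ j $ i < 0) \<longrightarrow> x $ i \<noteq> 0)}"

end

theory Submission
  imports Defs
begin

lemma chi_diff: "(\<chi> j. a j) - (\<chi> j. b j) = ((\<chi> j. a j - b j) :: real ^ 'r)"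
  by (simp add: vec_eq_iff)

lemma monom_zero_iff: "monom_pow x b = 0 \<longleftrightarrow> (\<exists>i. b$i \<noteq> 0 \<and> x$i = 0)"
  unfolding monom_pow_def rpow_def by (auto split: if_splits)

lemma monom_cong: "(\<And>i. b$i \<noteq> 0 \<Longrightarrow> x$i = y$i) \<Longrightarrow> monom_pow x b = monom_pow y b"
  unfolding monom_pow_def rpow_def by (intro prod.cong) auto

lemma monom_tendsto:
  fixes x e b :: "real ^ 'n"
  assumes xn: "\<And>i. x$i \<ge> 0" and en: "\<And>i. e$i \<ge> 0"
    and pos: "\<And>i. x$i = 0 \<Longrightarrow> b$i \<noteq> 0 \<Longrightarrow> b$i > 0"
  shows "((\<lambda>t. monom_pow (\<chi> i. x$i + t * e$i) b) \<longlongrightarrow> monom_pow x b) (at_right 0)"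
  unfolding monom_pow_def
proof (rule tendsto_prod)
  fix i
  show "((\<lambda>t. rpow ((\<chi> i. x$i + t * e$i) $ i) (b$i)) \<longlongrightarrow> rpow (x$i) (b$i)) (at_right 0)"
  proof (cases "b$i = 0")
    case True then show ?thesis by (simp add: rpow_def)
  next
    case False
    have ev: "eventually (\<lambda>t. x$i + t * e$i \<ge> 0) (at_right (0::real))"
      using eventually_at_right_less[of "0::real"]
      by (rule eventually_mono) (use xn en in auto)
    have l: "((\<lambda>t. x$i + t * e$i) \<longlongrightarrow> x$i + 0 * e$i) (at_right 0)"
      by (intro tendsto_intros)
    have "((\<lambda>t. (x$i + t * e$i) powr (b$i)) \<longlongrightarrow> (x$i) powr (b$i)) (at_right 0)"
      by (rule tendsto_powr') (use l ev pos False in auto)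
    then show ?thesis using False by (simp add: rpow_def)
  qed
qed

theorem mainTheorem10:
  fixes A :: "real ^ 'r ^ 'm" and B :: "real ^ 'n ^ 'r" and S :: "(real ^ 'n) set"
    and x y :: "real ^ 'n"
  assumes inj: "\<And>\<kappa>. pos_vec \<kappa> \<Longrightarrow> injective_wrt (gmak A B \<kappa>) S"
    and xO: "x \<in> Omega B" and yO: "y \<in> Omega B"
    and xy: "x \<noteq> y" and xyS: "x - y \<in> S"
    and zero: "\<And>j. monom_pow x (B $ j) = 0 \<Longrightarrow> monom_pow y (B $ j) = 0 \<Longrightarrow>
                 (\<forall>i. B $ j $ i \<noteq> 0 \<longrightarrow> x $ i = 0 \<and> y $ i = 0)"
  shows "\<forall>\<kappa>. pos_vec \<kappa> \<longrightarrow> gmak A B \<kappa> x \<noteq> gmak A B \<kappa> y"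
proof (intro allI impI notI)
  fix \<kappa> :: "real ^ 'r"
  assume kp: "pos_vec \<kappa>" and eq: "gmak A B \<kappa> x = gmak A B \<kappa> y"
  have xn: "\<And>i. x$i \<ge> 0" and yn: "\<And>i. y$i \<ge> 0"
    using xO yO by (auto simp: Omega_def nonneg_vec_def)
  have xneg: "\<And>i j. x$i = 0 \<Longrightarrow> B$j$i \<noteq> 0 \<Longrightarrow> B$j$i > 0"
    proof -
    fix i j assume a: "x$i = 0" "B$j$i \<noteq> 0"
    have "\<not> B$j$i < 0" using xO a(1) unfolding Omega_def by blast
    then show "B$j$i > 0" using a(2) by linarith
  qed
  have yneg: "\<And>i j. y$i = 0 \<Longrightarrow> B$j$i \<noteq> 0 \<Longrightarrow> B$j$i > 0"
    proof -
    fix i j assume a: "y$i = 0" "B$j$i \<noteq> 0"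
    have "\<not> B$j$i < 0" using yO a(1) unfolding Omega_def by blast
    then show "B$j$i > 0" using a(2) by linarith
  qed
  define e :: "real ^ 'n" where "e = (\<chi> i. if x$i = 0 \<or> y$i = 0 then 1 else 0)"
  have en: "\<And>i. e$i \<ge> 0" by (simp add: e_def)
  define X where "X = (\<lambda>t::real. (\<chi> i. x$i + t * e$i) :: real ^ 'n)"
  define Y where "Y = (\<lambda>t::real. (\<chi> i. y$i + t * e$i) :: real ^ 'n)"
  define d where "d = (\<lambda>j. monom_pow x (B$j) - monom_pow y (B$j))"
  define d' where "d' = (\<lambda>t j. monom_pow (X t) (B$j) - monom_pow (Y t) (B$j))"
  have ev: "eventually (\<lambda>t. \<forall>j. (d j > 0 \<longrightarrow> d' t j > 0) \<and> (d j < 0 \<longrightarrow> d' t j < 0)) (at_right 0)"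
  proof (rule eventually_all_finite)
    fix j
    have "((\<lambda>t. d' t j) \<longlongrightarrow> d j) (at_right 0)"
      unfolding d'_def d_def X_def Y_def
      by (intro tendsto_diff monom_tendsto xn yn en xneg yneg)
    then show "eventually (\<lambda>t. (d j > 0 \<longrightarrow> d' t j > 0) \<and> (d j < 0 \<longrightarrow> d' t j < 0)) (at_right 0)"
    proof (intro eventually_conj)
      show "eventually (\<lambda>t. d j > 0 \<longrightarrow> d' t j > 0) (at_right 0)"
      proof (cases "d j > 0")
        case True
        have "eventually (\<lambda>t. d' t j > 0) (at_right 0)"
          using order_tendstoD(1)[OF \<open>((\<lambda>t. d' t j) \<longlongrightarrow> d j) (at_right 0)\<close> True] .
        then show ?thesis by (rule eventually_mono) simp
      qed simp
      show "eventually (\<lambda>t. d j < 0 \<longrightarrow> d' t j < 0) (at_right 0)"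
      proof (cases "d j < 0")
        case True
        have "eventually (\<lambda>t. d' t j < 0) (at_right 0)"
          using order_tendstoD(2)[OF \<open>((\<lambda>t. d' t j) \<longlongrightarrow> d j) (at_right 0)\<close> True] .
        then show ?thesis by (rule eventually_mono) simp
      qed simp
    qed
  qed
  then have ev2: "eventually (\<lambda>t. t > 0 \<and> (\<forall>j. (d j > 0 \<longrightarrow> d' t j > 0) \<and> (d j < 0 \<longrightarrow> d' t j < 0))) (at_right 0)"
    using eventually_at_right_less[of "0::real"] by (auto elim: eventually_elim2)
  then obtain t where tp: "t > 0" and tj: "\<And>j. (d j > 0 \<longrightarrow> d' t j > 0) \<and> (d j < 0 \<longrightarrow> d' t j < 0)"
    using eventually_happens'[OF _ ev2] by auto
  have d0: "d' t j = 0" if "d j = 0" for j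
  proof (cases "monom_pow x (B$j) = 0")
    case True
    then have "monom_pow y (B$j) = 0" using that by (simp add: d_def)
    with True zero have z: "\<forall>i. B$j$i \<noteq> 0 \<longrightarrow> x$i = 0 \<and> y$i = 0" by blast
    have "monom_pow (X t) (B$j) = monom_pow (Y t) (B$j)"
      by (rule monom_cong) (use z in \<open>auto simp: X_def Y_def e_def\<close>)
    then show ?thesis by (simp add: d'_def)
  next
    case False
    then have F2: "monom_pow y (B$j) \<noteq> 0" using that by (simp add: d_def)
    have "monom_pow (X t) (B$j) = monom_pow x (B$j)"
      by (rule monom_cong) (use False F2 in \<open>auto simp: X_def e_def monom_zero_iff\<close>)
    moreover have "monom_pow (Y t) (B$j) = monom_pow y (B$j)"
      by (rule monom_cong) (use False F2 in \<open>auto simp: Y_def e_def monom_zero_iff\<close>)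
    ultimately show ?thesis using that by (simp add: d'_def d_def)
  qed
  define \<kappa>' :: "real ^ 'r" where "\<kappa>' = (\<chi> j. if d' t j = 0 then 1 else \<kappa>$j * d j / d' t j)"
  have kp': "pos_vec \<kappa>'"
    unfolding pos_vec_def
  proof
    fix j
    have kj: "\<kappa>$j > 0" using kp by (simp add: pos_vec_def)
    consider "d j > 0" | "d j < 0" | "d j = 0" by linarith
    then show "\<kappa>'$j > 0"
    proof cases
      case 1 then show ?thesis using tj[of j] kj by (simp add: \<kappa>'_def)
    next
      case 2 then have "d' t j < 0" using tj[of j] by auto
      then show ?thesis using 2 kj by (simp add: \<kappa>'_def divide_neg_neg mult_pos_neg)
    next
      case 3 then show ?thesis using d0 by (simp add: \<kappa>'_def)
    qed
  qed
  have key: "\<kappa>'$j * d' t j = \<kappa>$j * d j" for j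
  proof (cases "d' t j = 0")
    case True
    then have "d j = 0" using tj[of j] by (cases "d j > 0"; cases "d j < 0") auto
    then show ?thesis using True by (simp add: \<kappa>'_def)
  qed (simp add: \<kappa>'_def)
  have pX: "pos_vec (X t)" unfolding pos_vec_def X_def
  proof
    fix i
    show "(\<chi> i. x$i + t * e$i) $ i > 0"
    proof (cases "x$i = 0")
      case True then show ?thesis using tp by (simp add: e_def)
    next
      case False then have "x$i > 0" using xn[of i] by linarith
      then show ?thesis using tp en[of i] by (simp add: add_pos_nonneg)
    qed
  qed
  have pY: "pos_vec (Y t)" unfolding pos_vec_def Y_def
  proof
    fix i
    show "(\<chi> i. y$i + t * e$i) $ i > 0"
    proof (cases "y$i = 0")
      case True then show ?thesis using tp by (simp add: e_def)
    next
      case False then have "y$i > 0" using yn[of i] by linarith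
      then show ?thesis using tp en[of i] by (simp add: add_pos_nonneg)
    qed
  qed
  have diff: "X t - Y t = x - y" by (simp add: X_def Y_def vec_eq_iff)
  have "gmak A B \<kappa>' (X t) - gmak A B \<kappa>' (Y t) = A *v (\<chi> j. \<kappa>'$j * d' t j)"
    unfolding gmak_def d'_def vec_pow_def
    by (simp add: matrix_vector_mult_diff_distrib[symmetric] chi_diff right_diff_distrib)
  also have "\<dots> = A *v (\<chi> j. \<kappa>$j * d j)" using key by simp
  also have "\<dots> = gmak A B \<kappa> x - gmak A B \<kappa> y"
    unfolding gmak_def d_def vec_pow_def
    by (simp add: matrix_vector_mult_diff_distrib[symmetric] chi_diff right_diff_distrib)
  also have "\<dots> = 0" using eq by simp
  finally have "gmak A B \<kappa>' (X t) = gmak A B \<kappa>' (Y t)" by simp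
  moreover have "X t \<noteq> Y t" using diff xy by auto
  ultimately show False
    using inj[OF kp'] pX pY diff xyS unfolding injective_wrt_def by auto
qed

end
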